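(* Consider the delay differential equation initial value problem $$\dot u(t)=f\bigl(t,u(t),u(t-\tau(t,u(t)))\bigr),\quad t\ge t_0,\qquad u(t_0+\theta)=\phi(\theta)\ \text{for } \theta\in[-\tau_{\max},0],$$ with $f$ smooth, and suppose its solution $u$ has a breaking point $\xi_j>t_0$ of order $k$. Let $\xi(h)$ be the mesh point $t_n$ of the numerical mesh (with step size $h$) nearest to $\xi_j$. Then a necessary condition for an explicit functional continuous Runge–Kutta (FCRK) method to have global order $p>k$ on this problem is that $$\xi(h)-\xi_j=\mathcal{O}\bigl(h^{p/(k+1)}\bigr).$$
   Context: A breaking point of order $k$ of the solution $u$ is a point $\xi$ at which all derivatives of $u$ up to the $k$-th exist and the $k$-th derivative is Lipschitz continuous, while the $(k+1)$-st derivative may be discontinuous there (so the Taylor expansions of $u$ from the left and from the right of $\xi$ agree up to order $k$ but may differ from order $k+1$ on). An explicit $s$-stage FCRK method with mesh $t_0<t_1<\dots$, steps $h_n=t_{n+1}-t_n$, computes a continuous approximation $u^h$ by $u^h(t_n+\theta h_n)=u^h(t_n)+h_n\sum_{i=1}^s b_i(\theta)k_{n,i}$ for $\theta\in(0,1]$, with stages $U_{n,i}=u^h(t_n)+h_n\sum_{j<i}a_{ij}k_{n,j}$ and $k_{n,i}=f\bigl(t_n+c_ih_n,U_{n,i},\eta_{n,i}(t_n+c_ih_n-\tau(t_n+c_ih_n,U_{n,i}))\bigr)$, where $\eta_{n,i}(t)$ equals $\phi$ for $t\le t_0$, $u^h(t)$ for $t\in[t_0,t_n]$, and $u^h(t_n)+h_n\sum_{j<i}a_{ij}(\theta)k_{n,j}$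 with $\theta=(t-t_n)/h_n$ for $t>t_n$. The method has global (uniform) order $p$ if $\sup_{t}\|u(t)-u^h(t)\|=\mathcal{O}(h^p)$ over the computational interval as the step size $h\to0$. *)

theory Defs
  imports "HOL-Analysis.Analysis" "HOL-Computational_Algebra.Polynomial"
begin

text \<open>Directional (Gateaux) derivative and its iterates; a map between finite-dimensional
  spaces is C-infinity iff all iterated directional derivatives exist and are continuous.\<close>

definition dirderiv :: "('a::real_normed_vector \<Rightarrow> 'b::real_normed_vector) \<Rightarrow> 'a \<Rightarrow> 'a \<Rightarrow> 'b" where
  "dirderiv g v x = vector_derivative (\<lambda>s::real. g (x + s *\<^sub>R v)) (at 0)"

fun iterd :: "'a list \<Rightarrow> ('a::real_normed_vector \<Rightarrow> 'b::real_normed_vector) \<Rightarrow> 'a \<Rightarrow> 'b" where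
  "iterd [] g = g"
| "iterd (v # vs) g = dirderiv (iterd vs g) v"

definition smooth_map :: "('a::real_normed_vector \<Rightarrow> 'b::real_normed_vector) \<Rightarrow> bool" where
  "smooth_map g \<longleftrightarrow>
     (\<forall>vs. continuous_on UNIV (iterd vs g) \<and>
        (\<forall>v x. (\<lambda>s::real. iterd vs g (x + s *\<^sub>R v)) differentiable (at 0)))"

definition vderiv :: "(real \<Rightarrow> 'a::real_normed_vector) \<Rightarrow> real \<Rightarrow> 'a" where
  "vderiv g t = vector_derivative g (at t)"

definition smooth_real_fun :: "(real \<Rightarrow> 'a::real_normed_vector) \<Rightarrow> bool" where
  "smooth_real_fun g \<longleftrightarrow>
     (\<forall>j t. ((vderiv ^^ j) g has_vector_derivative (vderiv ^^ Suc j) g t) (at t))"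

text \<open>xi is a breaking point of order k: near xi, u coincides from the left and from the right
  with smooth functions (left/right Taylor expansions) whose derivatives agree up to order k
  and differ at order k+1 (genuine discontinuity of the (k+1)-st derivative).\<close>

definition breaking_point :: "(real \<Rightarrow> 'a::real_normed_vector) \<Rightarrow> real \<Rightarrow> nat \<Rightarrow> bool" where
  "breaking_point u \<xi> k \<longleftrightarrow>
     (\<exists>\<epsilon>>0. \<exists>gL gR. smooth_real_fun gL \<and> smooth_real_fun gR \<and>
        (\<forall>t\<in>{\<xi>-\<epsilon>..\<xi>}. u t = gL t) \<and> (\<forall>t\<in>{\<xi>..\<xi>+\<epsilon>}. u t = gR t) \<and>
        (\<forall>j\<le>k. (vderiv ^^ j) gL \<xi> = (vderiv ^^ j) gR \<xi>) \<and>
        (vderiv ^^ Suc k) gL \<xi> \<noteq> (vderiv ^^ Suc k) gR \<xi>)"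

definition dde_solution ::
  "(real \<times> 'a \<times> 'a \<Rightarrow> 'a::real_normed_vector) \<Rightarrow> (real \<Rightarrow> 'a \<Rightarrow> real) \<Rightarrow> (real \<Rightarrow> 'a) \<Rightarrow>
   real \<Rightarrow> real \<Rightarrow> real \<Rightarrow> (real \<Rightarrow> 'a) \<Rightarrow> bool" where
  "dde_solution f \<tau> \<phi> \<tau>max t0 T u \<longleftrightarrow>
     (\<forall>\<theta>\<in>{-\<tau>max..0}. u (t0 + \<theta>) = \<phi> \<theta>) \<and>
     (\<forall>t\<in>{t0..T}. 0 \<le> \<tau> t (u t) \<and> \<tau> t (u t) \<le> \<tau>max) \<and>
     (\<forall>t\<in>{t0..T}. (u has_vector_derivative f (t, u t, u (t - \<tau> t (u t)))) (at t within {t0..T}))"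

definition admissible_mesh :: "real \<Rightarrow> real \<Rightarrow> real \<Rightarrow> (nat \<Rightarrow> real) \<Rightarrow> bool" where
  "admissible_mesh t0 T h tm \<longleftrightarrow>
     tm 0 = t0 \<and> (\<forall>n. tm n < tm (Suc n) \<and> tm (Suc n) - tm n \<le> h) \<and> (\<exists>N. T \<le> tm N)"

text \<open>uh is the continuous approximation produced on mesh tm by the explicit s-stage FCRK method
  with coefficients A (a_ij), continuous-extension weights At (a_ij(theta)), nodes c and
  polynomial weights b_i = poly (B i).\<close>

definition fcrk_solution ::
  "nat \<Rightarrow> (nat \<Rightarrow> nat \<Rightarrow> real) \<Rightarrow> (nat \<Rightarrow> nat \<Rightarrow> real \<Rightarrow> real) \<Rightarrow> (nat \<Rightarrow> real) \<Rightarrow> (nat \<Rightarrow> real poly) \<Rightarrow>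
   (real \<times> 'a \<times> 'a \<Rightarrow> 'a::real_normed_vector) \<Rightarrow> (real \<Rightarrow> 'a \<Rightarrow> real) \<Rightarrow> (real \<Rightarrow> 'a) \<Rightarrow> real \<Rightarrow>
   (nat \<Rightarrow> real) \<Rightarrow> (real \<Rightarrow> 'a) \<Rightarrow> bool" where
  "fcrk_solution s A At c B f \<tau> \<phi> t0 tm uh \<longleftrightarrow>
     uh t0 = \<phi> 0 \<and>
     (\<forall>n. \<exists>K :: nat \<Rightarrow> 'a.
        let hn = tm (Suc n) - tm n in
        (\<forall>\<theta>\<in>{0<..1}. uh (tm n + \<theta> * hn) = uh (tm n) + hn *\<^sub>R (\<Sum>i<s. poly (B i) \<theta> *\<^sub>R K i)) \<and>
        (\<forall>i<s.
           let ti = tm n + c i * hn;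
               U = uh (tm n) + hn *\<^sub>R (\<Sum>j<i. A i j *\<^sub>R K j);
               \<eta> = (\<lambda>t. if t \<le> t0 then \<phi> (t - t0)
                        else if t \<le> tm n then uh t
                        else uh (tm n) + hn *\<^sub>R (\<Sum>j<i. At i j ((t - tm n) / hn) *\<^sub>R K j))
           in K i = f (ti, U, \<eta> (ti - \<tau> ti U))))"

definition global_order ::
  "real \<Rightarrow> real \<Rightarrow> real \<Rightarrow> (real \<Rightarrow> 'a::real_normed_vector) \<Rightarrow> (real \<Rightarrow> real \<Rightarrow> 'a) \<Rightarrow> nat \<Rightarrow> bool" where
  "global_order H t0 T u uh p \<longleftrightarrow>
     (\<exists>C h0. 0 < h0 \<and> (\<forall>h. 0 < h \<and> h \<le> h0 \<and> h \<le> H \<longrightarrow>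
        (\<forall>t\<in>{t0..T}. norm (u t - uh h t) \<le> C * h ^ p)))"

end

theory Submission
  imports Defs
begin


definition fdiff :: "nat \<Rightarrow> (nat \<Rightarrow> real) \<Rightarrow> real" where
  "fdiff M g = (\<Sum>j\<le>M. (-1)^j * real (M choose j) * g j)"

lemma fdiff_sum: "fdiff M (\<lambda>j. \<Sum>i\<in>I. g i j) = (\<Sum>i\<in>I. fdiff M (g i))"
  unfolding fdiff_def by (simp add: sum_distrib_left sum.swap[of _ I])

lemma fdiff_cmult: "fdiff M (\<lambda>j. c * g j) = c * fdiff M g"
  unfolding fdiff_def by (simp add: sum_distrib_left algebra_simps)

lemma fdiff_add: "fdiff M (\<lambda>j. g j + h j) = fdiff M g + fdiff M h"
  unfolding fdiff_def by (simp add: sum.distrib algebra_simps)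

lemma fdiff_diff: "fdiff M (\<lambda>j. g j - h j) = fdiff M g - fdiff M h"
  unfolding fdiff_def by (simp add: sum_subtractf algebra_simps)

lemma fdiff_Suc: "fdiff (Suc M) g = fdiff M g - fdiff M (\<lambda>j. g (Suc j))"
proof -
  have A: "fdiff M g = g 0 + (\<Sum>j\<le>M. (-1)^Suc j * real (M choose Suc j) * g (Suc j))"
  proof -
    have "fdiff M g = (\<Sum>j\<le>Suc M. (-1)^j * real (M choose j) * g j)"
      unfolding fdiff_def by simp
    also have "\<dots> = g 0 + (\<Sum>j\<le>M. (-1)^Suc j * real (M choose Suc j) * g (Suc j))"
      by (subst sum.atMost_Suc_shift) simp
    finally show ?thesis .
  qed
  have "fdiff (Suc M) g = g 0 + (\<Sum>j\<le>M. (-1)^Suc j * real (Suc M choose Suc j) * g (Suc j))"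
    unfolding fdiff_def by (subst sum.atMost_Suc_shift) simp
  also have "\<dots> = g 0 + (\<Sum>j\<le>M. (-1)^Suc j * real (M choose Suc j) * g (Suc j))
       + (\<Sum>j\<le>M. (-1)^Suc j * real (M choose j) * g (Suc j))"
    by (simp add: sum.distrib[symmetric] algebra_simps)
  also have "(\<Sum>j\<le>M. (-1)^Suc j * real (M choose j) * g (Suc j)) = - fdiff M (\<lambda>j. g (Suc j))"
    unfolding fdiff_def by (simp add: sum_negf[symmetric])
  finally show ?thesis using A by simp
qed

lemma fdiff_shift_pow:
  assumes "\<And>r. r < i \<Longrightarrow> fdiff M (\<lambda>j. (\<alpha> + \<beta> * real j)^r) = 0"
  shows "fdiff M (\<lambda>j. (\<alpha> + \<beta> * real (Suc j))^i) = fdiff M (\<lambda>j. (\<alpha> + \<beta> * real j)^i)"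
proof -
  have "(\<lambda>j. (\<alpha> + \<beta> * real (Suc j))^i) = (\<lambda>j. \<Sum>r\<le>i. real (i choose r) * \<beta>^(i-r) * (\<alpha> + \<beta> * real j)^r)"
  proof
    fix j
    have "(\<alpha> + \<beta> * real (Suc j))^i = ((\<alpha> + \<beta> * real j) + \<beta>)^i" by (simp add: algebra_simps)
    also have "\<dots> = (\<Sum>r\<le>i. real (i choose r) * (\<alpha> + \<beta> * real j)^r * \<beta>^(i-r))"
      by (rule binomial_ring)
    finally show "(\<alpha> + \<beta> * real (Suc j))^i = (\<Sum>r\<le>i. real (i choose r) * \<beta>^(i-r) * (\<alpha> + \<beta> * real j)^r)"
      by (simp add: algebra_simps)
  qed
  hence "fdiff M (\<lambda>j. (\<alpha> + \<beta> * real (Suc j))^i) = (\<Sum>r\<le>i. real (i choose r) * \<beta>^(i-r) * fdiff M (\<lambda>j. (\<alpha> + \<beta> * real j)^r))"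
    by (simp add: fdiff_sum fdiff_cmult)
  also have "\<dots> = (\<Sum>r\<in>{i}. real (i choose r) * \<beta>^(i-r) * fdiff M (\<lambda>j. (\<alpha> + \<beta> * real j)^r))"
    by (rule sum.mono_neutral_right) (auto simp: assms)
  finally show ?thesis by simp
qed

lemma fdiff_affine_pow: "i < M \<Longrightarrow> fdiff M (\<lambda>j. (\<alpha> + \<beta> * real j)^i) = 0"
proof (induction M arbitrary: i)
  case 0 then show ?case by simp
next
  case (Suc M)
  have "fdiff M (\<lambda>j. (\<alpha> + \<beta> * real (Suc j))^i) = fdiff M (\<lambda>j. (\<alpha> + \<beta> * real j)^i)"
    by (rule fdiff_shift_pow) (use Suc in auto)
  then show ?case by (simp add: fdiff_Suc)
qed

lemma fdiff_poly: "degree q < M \<Longrightarrow> fdiff M (\<lambda>j. poly q (\<alpha> + \<beta> * real j)) = 0"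
  by (simp add: poly_altdef fdiff_sum fdiff_cmult fdiff_affine_pow)

lemma fdiff_taylor: "fdiff M (\<lambda>j. \<Sum>i<M. c i * (\<alpha> + \<beta> * real j)^i) = 0"
  by (simp add: fdiff_sum fdiff_cmult fdiff_affine_pow)

lemma fdiff_bound: "(\<And>j. j \<le> M \<Longrightarrow> \<bar>g j\<bar> \<le> B) \<Longrightarrow> \<bar>fdiff M g\<bar> \<le> 2^M * B"
proof -
  assume b: "\<And>j. j \<le> M \<Longrightarrow> \<bar>g j\<bar> \<le> B"
  have "\<bar>fdiff M g\<bar> \<le> (\<Sum>j\<le>M. \<bar>(-1)^j * real (M choose j) * g j\<bar>)"
    unfolding fdiff_def by (rule sum_abs)
  also have "\<dots> \<le> (\<Sum>j\<le>M. real (M choose j) * B)"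
    by (rule sum_mono) (simp add: abs_mult b mult_left_mono)
  also have "\<dots> = 2^M * B"
    using choose_row_sum[of M] by (simp add: sum_distrib_right[symmetric] flip: of_nat_sum)
  finally show ?thesis .
qed



lemma inner_vderiv:
  fixes F :: "real \<Rightarrow> 'a::real_inner"
  assumes "(F has_vector_derivative F') (at t)"
  shows "((\<lambda>t. F t \<bullet> a) has_real_derivative (F' \<bullet> a)) (at t)"
proof -
  have "((\<lambda>t. F t \<bullet> a) has_derivative (\<lambda>h. (h *\<^sub>R F') \<bullet> a)) (at t)"
    using assms unfolding has_vector_derivative_def
    by (intro derivative_eq_intros) auto
  then show ?thesis
    unfolding has_field_derivative_def
    by (simp add: mult.commute[of _ "F' \<bullet> a"])
qed

lemma smooth_shift_deriv:
  assumes "smooth_real_fun g"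
  shows "((\<lambda>y. (vderiv ^^ m) g (\<xi> + y) \<bullet> a) has_real_derivative ((vderiv ^^ Suc m) g (\<xi> + y) \<bullet> a)) (at y)"
proof -
  have "((vderiv ^^ m) g has_vector_derivative (vderiv ^^ Suc m) g (\<xi> + y)) (at (\<xi> + y))"
    using assms unfolding smooth_real_fun_def by blast
  hence "(((\<lambda>t. (vderiv ^^ m) g t \<bullet> a)) has_real_derivative ((vderiv ^^ Suc m) g (\<xi> + y) \<bullet> a)) (at (\<xi> + y))"
    by (rule inner_vderiv)
  hence "(((\<lambda>t. (vderiv ^^ m) g t \<bullet> a) \<circ> (\<lambda>y. \<xi> + y)) has_real_derivative ((vderiv ^^ Suc m) g (\<xi> + y) \<bullet> a) * 1) (at y)"
    by (intro DERIV_chain) (auto intro!: derivative_eq_intros)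
  thus ?thesis by (simp add: o_def)
qed

lemma smooth_taylor:
  assumes "smooth_real_fun g"
  shows "\<exists>K\<ge>0. \<forall>y. \<bar>y\<bar> \<le> 1 \<longrightarrow>
     \<bar>g (\<xi> + y) \<bullet> a - (\<Sum>m<n. ((vderiv ^^ m) g \<xi> \<bullet> a) / fact m * y ^ m)\<bar> \<le> K * \<bar>y\<bar> ^ n"
proof -
  define D where "D = (\<lambda>m y. (vderiv ^^ m) g (\<xi> + y) \<bullet> a)"
  have DER: "\<forall>m y. DERIV (D m) y :> D (Suc m) y"
    unfolding D_def using smooth_shift_deriv[OF assms] by blast
  have "continuous_on {-1..1} (D n)"
    using DER by (meson DERIV_isCont continuous_at_imp_continuous_on)
  hence "compact (D n ` {-1..1})" by (intro compact_continuous_image) auto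
  then obtain B where B: "\<forall>x\<in>D n ` {-1..1}. norm x \<le> B"
    using compact_imp_bounded bounded_iff by metis
  show ?thesis
  proof (intro exI[of _ "\<bar>B\<bar> / fact n"] conjI allI impI)
    show "0 \<le> \<bar>B\<bar> / fact n" by simp
    fix y :: real assume y: "\<bar>y\<bar> \<le> 1"
    obtain t where t: "\<bar>t\<bar> \<le> \<bar>y\<bar>"
      and eq: "D 0 y = (\<Sum>m<n. D m 0 / fact m * y ^ m) + D n t / fact n * y ^ n"
      using Maclaurin_all_le[where diff=D and f="D 0" and n=n and x=y, OF refl DER] by blast
    have "t \<in> {-1..1}" using t y by auto
    hence "\<bar>D n t\<bar> \<le> B" using B by auto
    hence "\<bar>D n t\<bar> \<le> \<bar>B\<bar>" by linarith
    hence "\<bar>D n t / fact n * y ^ n\<bar> \<le> \<bar>B\<bar> / fact n * \<bar>y\<bar> ^ n"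
      by (simp add: abs_mult power_abs divide_right_mono mult_right_mono)
    thus "\<bar>g (\<xi> + y) \<bullet> a - (\<Sum>m<n. ((vderiv ^^ m) g \<xi> \<bullet> a) / fact m * y ^ m)\<bar> \<le> \<bar>B\<bar> / fact n * \<bar>y\<bar> ^ n"
      using eq unfolding D_def by simp
  qed
qed



lemma fdiff_delta: "fdiff M (\<lambda>j. if j = M then X else 0) = (-1)^M * X"
  unfolding fdiff_def by (simp add: if_distrib cong: if_cong)

lemma core:
  fixes gL gR :: "real \<Rightarrow> 'a::real_inner"
  assumes sL: "smooth_real_fun gL" and sR: "smooth_real_fun gR"
    and eq: "\<forall>j\<le>k. (vderiv^^j) gL \<xi> = (vderiv^^j) gR \<xi>"
    and a_def: "a = (vderiv^^Suc k) gR \<xi> - (vderiv^^Suc k) gL \<xi>"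
    and M: "Suc (Suc k) \<le> M"
  shows "\<exists>K3\<ge>0. \<forall>\<delta>. 0 < \<delta> \<and> real M * \<delta> \<le> 1 \<longrightarrow>
    (a \<bullet> a) / fact (Suc k) * \<delta> ^ Suc k \<le> K3 * \<delta> ^ Suc (Suc k) +
      \<bar>fdiff M (\<lambda>j. (if j = M then gR else gL) (\<xi> + (real j + 1 - real M) * \<delta>) \<bullet> a)\<bar>"
proof -
  obtain KL where KL: "KL \<ge> 0" "\<forall>y. \<bar>y\<bar> \<le> 1 \<longrightarrow>
     \<bar>gL (\<xi> + y) \<bullet> a - (\<Sum>m<M. ((vderiv ^^ m) gL \<xi> \<bullet> a) / fact m * y ^ m)\<bar> \<le> KL * \<bar>y\<bar> ^ M"
    using smooth_taylor[OF sL] by blast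
  obtain K1 where K1: "K1 \<ge> 0" "\<forall>y. \<bar>y\<bar> \<le> 1 \<longrightarrow>
     \<bar>gL (\<xi> + y) \<bullet> a - (\<Sum>m<Suc (Suc k). ((vderiv ^^ m) gL \<xi> \<bullet> a) / fact m * y ^ m)\<bar> \<le> K1 * \<bar>y\<bar> ^ Suc (Suc k)"
    using smooth_taylor[OF sL] by blast
  obtain K2 where K2: "K2 \<ge> 0" "\<forall>y. \<bar>y\<bar> \<le> 1 \<longrightarrow>
     \<bar>gR (\<xi> + y) \<bullet> a - (\<Sum>m<Suc (Suc k). ((vderiv ^^ m) gR \<xi> \<bullet> a) / fact m * y ^ m)\<bar> \<le> K2 * \<bar>y\<bar> ^ Suc (Suc k)"
    using smooth_taylor[OF sR] by blast
  define K3 where "K3 = 2^M * KL * real M ^ M + K1 + K2"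
  have K3: "K3 \<ge> 0" unfolding K3_def using KL K1 K2 by simp
  show ?thesis
  proof (intro exI[of _ K3] conjI allI impI K3)
    fix \<delta> :: real assume d: "0 < \<delta> \<and> real M * \<delta> \<le> 1"
    have M1: "real M \<ge> 2" using M by simp
    have d1: "\<delta> \<le> 1" using d M1
      by (smt (verit, best) mult_le_cancel_right1)
    define F where "F = (\<lambda>j. (if j = M then gR else gL) (\<xi> + (real j + 1 - real M) * \<delta>) \<bullet> a)"
    define Dd where "Dd = gR (\<xi> + \<delta>) \<bullet> a - gL (\<xi> + \<delta>) \<bullet> a"
    define c where "c = (\<lambda>m. ((vderiv ^^ m) gL \<xi> \<bullet> a) / fact m)"
    define E where "E = (\<lambda>j. gL (\<xi> + (real j + 1 - real M) * \<delta>) \<bullet> a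
         - (\<Sum>m<M. c m * ((1 - real M) * \<delta> + \<delta> * real j) ^ m))"
    have Fsplit: "F = (\<lambda>j. (\<Sum>m<M. c m * ((1 - real M) * \<delta> + \<delta> * real j) ^ m) + E j
         + (if j = M then Dd else 0))"
      unfolding F_def E_def Dd_def by (auto simp: fun_eq_iff)
    have "fdiff M F = fdiff M E + (-1)^M * Dd"
      unfolding Fsplit by (subst fdiff_add, subst fdiff_add) (simp add: fdiff_taylor fdiff_delta)
    have Ebound: "\<bar>E j\<bar> \<le> KL * (real M * \<delta>) ^ M" if j: "j \<le> M" for j
    proof -
      have yb: "\<bar>(real j + 1 - real M) * \<delta>\<bar> \<le> real M * \<delta>"
      proof -
        have "\<bar>real j + 1 - real M\<bar> \<le> real M" using j M1 by auto
        thus ?thesis using d by (simp add: abs_mult mult_right_mono)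
      qed
      have "(\<Sum>m<M. c m * ((1 - real M) * \<delta> + \<delta> * real j) ^ m) =
            (\<Sum>m<M. ((vderiv ^^ m) gL \<xi> \<bullet> a) / fact m * ((real j + 1 - real M) * \<delta>) ^ m)"
        unfolding c_def by (intro sum.cong) (auto simp: algebra_simps)
      hence "\<bar>E j\<bar> \<le> KL * \<bar>(real j + 1 - real M) * \<delta>\<bar> ^ M"
        unfolding E_def using KL(2) yb d by auto
      also have "\<dots> \<le> KL * (real M * \<delta>) ^ M"
        using yb KL(1) by (intro mult_left_mono power_mono) auto
      finally show ?thesis .
    qed
    have fE: "\<bar>fdiff M E\<bar> \<le> 2^M * (KL * (real M * \<delta>) ^ M)"
      by (rule fdiff_bound) (rule Ebound)
    have "(real M * \<delta>) ^ M = real M ^ M * \<delta> ^ M" by (simp add: power_mult_distrib)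
    also have "\<delta> ^ M \<le> \<delta> ^ Suc (Suc k)"
      using d d1 M by (intro power_decreasing) auto
    hence "real M ^ M * \<delta> ^ M \<le> real M ^ M * \<delta> ^ Suc (Suc k)" by (simp add: mult_left_mono)
    finally have pw: "(real M * \<delta>) ^ M \<le> real M ^ M * \<delta> ^ Suc (Suc k)" .
    
    have dd: "\<bar>\<delta>\<bar> \<le> 1" using d d1 by simp
    have taylor_diff: "(\<Sum>m<Suc (Suc k). ((vderiv ^^ m) gR \<xi> \<bullet> a) / fact m * \<delta> ^ m)
        - (\<Sum>m<Suc (Suc k). ((vderiv ^^ m) gL \<xi> \<bullet> a) / fact m * \<delta> ^ m)
        = (a \<bullet> a) / fact (Suc k) * \<delta> ^ Suc k"
    proof -
      have "(\<Sum>m<Suc (Suc k). ((vderiv ^^ m) gR \<xi> \<bullet> a) / fact m * \<delta> ^ m)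
        - (\<Sum>m<Suc (Suc k). ((vderiv ^^ m) gL \<xi> \<bullet> a) / fact m * \<delta> ^ m)
        = (\<Sum>m<Suc (Suc k). (((vderiv ^^ m) gR \<xi> - (vderiv ^^ m) gL \<xi>) \<bullet> a) / fact m * \<delta> ^ m)"
        unfolding sum_subtractf[symmetric]
        by (intro sum.cong) (auto simp: inner_diff_left diff_divide_distrib algebra_simps)
      also have "\<dots> = (\<Sum>m<Suc k. (((vderiv ^^ m) gR \<xi> - (vderiv ^^ m) gL \<xi>) \<bullet> a) / fact m * \<delta> ^ m)
           + (a \<bullet> a) / fact (Suc k) * \<delta> ^ Suc k"
        by (simp add: a_def)
      also have "(\<Sum>m<Suc k. (((vderiv ^^ m) gR \<xi> - (vderiv ^^ m) gL \<xi>) \<bullet> a) / fact m * \<delta> ^ m) = 0"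
        using eq by (intro sum.neutral) auto
      finally show ?thesis by simp
    qed
    have "(a \<bullet> a) / fact (Suc k) * \<delta> ^ Suc k \<le> Dd + (K1 + K2) * \<delta> ^ Suc (Suc k)"
      using K1(2)[rule_format, OF dd] K2(2)[rule_format, OF dd] taylor_diff d
      unfolding Dd_def by (simp add: algebra_simps)
    moreover have "\<bar>Dd\<bar> \<le> \<bar>fdiff M F\<bar> + \<bar>fdiff M E\<bar>"
      using \<open>fdiff M F = fdiff M E + (-1)^M * Dd\<close>
    proof -
      have "\<bar>(-1)^M * Dd\<bar> = \<bar>Dd\<bar>" by (simp add: abs_mult)
      thus ?thesis using \<open>fdiff M F = fdiff M E + (-1)^M * Dd\<close> by linarith
    qed
    ultimately have "(a \<bullet> a) / fact (Suc k) * \<delta> ^ Suc k \<le>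
        \<bar>fdiff M F\<bar> + 2^M * (KL * (real M ^ M * \<delta> ^ Suc (Suc k))) + (K1 + K2) * \<delta> ^ Suc (Suc k)"
      using fE pw KL(1) by (smt (verit) mult_left_mono zero_le_power)
    thus "(a \<bullet> a) / fact (Suc k) * \<delta> ^ Suc k \<le> K3 * \<delta> ^ Suc (Suc k) + \<bar>fdiff M F\<bar>"
      unfolding K3_def by (simp add: algebra_simps)
  qed
qed



lemma mesh_bracket:
  assumes "admissible_mesh t0 T h tm" "t0 < \<xi>" "\<xi> < T"
  shows "\<exists>n. tm n < \<xi> \<and> \<xi> \<le> tm (Suc n)"
proof (rule ccontr)
  assume "\<not> ?thesis"
  hence step: "\<And>n. tm n < \<xi> \<Longrightarrow> tm (Suc n) < \<xi>" by force
  have "tm n < \<xi>" for n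
    by (induction n) (use assms step in \<open>auto simp: admissible_mesh_def\<close>)
  moreover obtain N where "T \<le> tm N" using assms(1) unfolding admissible_mesh_def by blast
  ultimately show False using assms(3) by (metis less_le_trans order_less_asym)
qed

lemma mesh_ge:
  assumes "admissible_mesh t0 T h tm"
  shows "t0 \<le> tm n"
proof (induction n)
  case 0 then show ?case using assms by (simp add: admissible_mesh_def)
next
  case (Suc n)
  have "tm n < tm (Suc n)" using assms by (simp add: admissible_mesh_def)
  then show ?case using Suc by simp
qed

lemma root_bound:
  fixes x A h :: real
  assumes "0 \<le> x" "0 \<le> A" "0 < h" "x ^ Suc k \<le> A * h ^ p"
  shows "x \<le> A powr (1 / real (Suc k)) * h powr (real p / real (Suc k))"
proof -
  have "x = (x ^ Suc k) powr (1 / real (Suc k))"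
  proof (cases "x = 0")
    case True then show ?thesis by simp
  next
    case False
    hence "x > 0" using assms by simp
    hence "(x ^ Suc k) powr (1 / real (Suc k)) = (x powr real (Suc k)) powr (1 / real (Suc k))"
      by (simp only: powr_realpow)
    also have "\<dots> = x" using \<open>x > 0\<close> by (simp add: powr_powr)
    finally show ?thesis by simp
  qed
  also have "\<dots> \<le> (A * h ^ p) powr (1 / real (Suc k))"
    using assms by (intro powr_mono2) auto
  also have "\<dots> = A powr (1 / real (Suc k)) * (h ^ p) powr (1 / real (Suc k))"
    using assms by (simp add: powr_mult)
  also have "(h ^ p) powr (1 / real (Suc k)) = h powr (real p / real (Suc k))"
    using assms by (simp add: powr_realpow[symmetric] powr_powr)
  finally show ?thesis .
qed

lemma fcrk_poly:
  fixes a :: "'a::real_inner"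
  assumes "fcrk_solution s A At c B f \<tau> \<phi> t0 tm uh" "tm n < tm (Suc n)"
  shows "\<exists>Q. degree Q \<le> (\<Sum>i<s. degree (B i)) \<and>
     (\<forall>x. tm n < x \<and> x \<le> tm (Suc n) \<longrightarrow> uh x \<bullet> a = poly Q ((x - tm n) / (tm (Suc n) - tm n)))"
proof -
  define hn where "hn = tm (Suc n) - tm n"
  have hn: "hn > 0" using assms(2) by (simp add: hn_def)
  obtain K :: "nat \<Rightarrow> 'a" where K: "\<forall>\<theta>\<in>{0<..1}. uh (tm n + \<theta> * hn) = uh (tm n) + hn *\<^sub>R (\<Sum>i<s. poly (B i) \<theta> *\<^sub>R K i)"
    using assms(1) unfolding fcrk_solution_def Let_def hn_def by blast
  define Q where "Q = [:uh (tm n) \<bullet> a:] + smult hn (\<Sum>i<s. smult (K i \<bullet> a) (B i))"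
  have "degree Q \<le> (\<Sum>i<s. degree (B i))"
    unfolding Q_def
  proof (intro degree_add_le)
    show "degree [:uh (tm n) \<bullet> a:] \<le> (\<Sum>i<s. degree (B i))" by simp
    have "degree (\<Sum>i<s. smult (K i \<bullet> a) (B i)) \<le> (\<Sum>i<s. degree (B i))"
    proof (rule degree_sum_le)
      fix i assume "i \<in> {..<s}"
      hence "degree (B i) \<le> (\<Sum>i<s. degree (B i))" by (intro member_le_sum) auto
      thus "degree (smult (K i \<bullet> a) (B i)) \<le> (\<Sum>i<s. degree (B i))"
        using degree_smult_le order_trans by blast
    qed simp
    thus "degree (smult hn (\<Sum>i<s. smult (K i \<bullet> a) (B i))) \<le> (\<Sum>i<s. degree (B i))"
      using degree_smult_le order_trans by blast
  qed
  moreover have "uh x \<bullet> a = poly Q ((x - tm n) / hn)" if x: "tm n < x" "x \<le> tm (Suc n)" for x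
  proof -
    define \<theta> where "\<theta> = (x - tm n) / hn"
    have th: "\<theta> \<in> {0<..1}" using x hn unfolding \<theta>_def hn_def by (auto simp: field_simps)
    have xe: "x = tm n + \<theta> * hn" using hn unfolding \<theta>_def by simp
    have "uh x \<bullet> a = (uh (tm n) + hn *\<^sub>R (\<Sum>i<s. poly (B i) \<theta> *\<^sub>R K i)) \<bullet> a"
      using K th xe by simp
    also have "\<dots> = poly Q \<theta>"
      unfolding Q_def by (simp add: inner_add_left inner_sum_left poly_sum sum_distrib_left algebra_simps)
    finally show ?thesis unfolding \<theta>_def .
  qed
  ultimately show ?thesis unfolding hn_def by blast
qed



theorem theorem4:
  fixes f :: "real \<times> 'a::euclidean_space \<times> 'a \<Rightarrow> 'a"
    and \<tau> :: "real \<Rightarrow> 'a \<Rightarrow> real" and \<phi> :: "real \<Rightarrow> 'a" and u :: "real \<Rightarrow> 'a"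
    and t0 T \<tau>max \<xi> H :: real and k p s :: nat
    and A :: "nat \<Rightarrow> nat \<Rightarrow> real" and At :: "nat \<Rightarrow> nat \<Rightarrow> real \<Rightarrow> real"
    and c :: "nat \<Rightarrow> real" and B :: "nat \<Rightarrow> real poly"
    and mesh :: "real \<Rightarrow> nat \<Rightarrow> real" and uh :: "real \<Rightarrow> real \<Rightarrow> 'a"
  assumes "smooth_map f"
    and "0 \<le> \<tau>max" and "t0 < T"
    and "dde_solution f \<tau> \<phi> \<tau>max t0 T u"
    and "t0 < \<xi>" and "\<xi> < T"
    and "breaking_point u \<xi> k"
    and "0 < H"
    and "\<forall>h\<in>{0<..H}. admissible_mesh t0 T h (mesh h) \<and>
                      fcrk_solution s A At c B f \<tau> \<phi> t0 (mesh h) (uh h)"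
    and "global_order H t0 T u uh p"
    and "k < p"
  shows "\<exists>C h0. 0 < h0 \<and> (\<forall>h. 0 < h \<and> h \<le> h0 \<and> h \<le> H \<longrightarrow>
           (\<exists>n. \<bar>mesh h n - \<xi>\<bar> \<le> C * h powr (real p / real (Suc k))))"
proof -
  obtain \<epsilon> gL gR where eps: "\<epsilon> > 0" and sL: "smooth_real_fun gL" and sR: "smooth_real_fun gR"
    and uL: "\<forall>t\<in>{\<xi>-\<epsilon>..\<xi>}. u t = gL t" and uR: "\<forall>t\<in>{\<xi>..\<xi>+\<epsilon>}. u t = gR t"
    and eqd: "\<forall>j\<le>k. (vderiv ^^ j) gL \<xi> = (vderiv ^^ j) gR \<xi>"
    and neq: "(vderiv ^^ Suc k) gL \<xi> \<noteq> (vderiv ^^ Suc k) gR \<xi>"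
    using assms(7) unfolding breaking_point_def by blast
  define a where "a = (vderiv ^^ Suc k) gR \<xi> - (vderiv ^^ Suc k) gL \<xi>"
  have a0: "a \<noteq> 0" using neq by (simp add: a_def)
  define m where "m = (\<Sum>i<s. degree (B i))"
  define M where "M = Suc (Suc (m + k))"
  have M2: "Suc (Suc k) \<le> M" by (simp add: M_def)
  obtain K3 where K3: "K3 \<ge> 0" and core: "\<forall>\<delta>. 0 < \<delta> \<and> real M * \<delta> \<le> 1 \<longrightarrow>
    (a \<bullet> a) / fact (Suc k) * \<delta> ^ Suc k \<le> K3 * \<delta> ^ Suc (Suc k) +
      \<bar>fdiff M (\<lambda>j. (if j = M then gR else gL) (\<xi> + (real j + 1 - real M) * \<delta>) \<bullet> a)\<bar>"
    using core[OF sL sR eqd a_def M2] by blast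
  obtain Cg hg where hg: "0 < hg" and Cg: "\<forall>h. 0 < h \<and> h \<le> hg \<and> h \<le> H \<longrightarrow>
        (\<forall>t\<in>{t0..T}. norm (u t - uh h t) \<le> Cg * h ^ p)"
    using assms(10) unfolding global_order_def by blast
  have Cg0: "Cg \<ge> 0"
  proof -
    define h1 where "h1 = min hg H"
    have h1: "0 < h1" "h1 \<le> hg" "h1 \<le> H" using hg assms(8) by (auto simp: h1_def)
    hence "norm (u t0 - uh h1 t0) \<le> Cg * h1 ^ p" using Cg assms(3) by auto
    hence "0 \<le> Cg * h1 ^ p" by (meson norm_ge_zero order_trans)
    moreover have "h1 ^ p > 0" using h1 by simp
    ultimately show ?thesis by (simp add: zero_le_mult_iff)
  qed
  define c0 where "c0 = (a \<bullet> a) / fact (Suc k)"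
  have c0: "c0 > 0" using a0 by (simp add: c0_def)
  define C1 where "C1 = 2^M * (norm a * Cg)"
  have C1: "C1 \<ge> 0" using Cg0 by (simp add: C1_def)
  define h0 where "h0 = min hg (min \<epsilon> (min 1 (min (T - \<xi>) (c0 / (2 * K3 + 1)))))"
  define CC where "CC = real M * (2 * C1 / c0) powr (1 / real (Suc k))"
  have CC: "CC \<ge> 0" by (simp add: CC_def)
  have h0: "h0 > 0" using hg eps assms(6) c0 K3 by (simp add: h0_def)
  show ?thesis
  proof (rule exI[of _ CC], rule exI[of _ h0], intro conjI h0 allI impI)
    fix h :: real assume h: "0 < h \<and> h \<le> h0 \<and> h \<le> H"
    have adm: "admissible_mesh t0 T h (mesh h)" and fc: "fcrk_solution s A At c B f \<tau> \<phi> t0 (mesh h) (uh h)"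
      using assms(9) h by auto
    define tm where "tm = mesh h"
    obtain n where n: "tm n < \<xi>" "\<xi> \<le> tm (Suc n)"
      using mesh_bracket[OF adm assms(5,6)] unfolding tm_def by blast
    have step: "tm n < tm (Suc n)" "tm (Suc n) - tm n \<le> h"
      using adm unfolding admissible_mesh_def tm_def by auto
    have tn0: "t0 \<le> tm n" using mesh_ge[OF adm] unfolding tm_def by blast
    define d where "d = min (\<xi> - tm n) (tm (Suc n) - \<xi>)"
    have dpos: "d \<ge> 0" using n by (simp add: d_def)
    have dh: "d \<le> h" using n step by (simp add: d_def)
    have hpos: "0 \<le> CC * h powr (real p / real (Suc k))" using CC by simp
    show "\<exists>n. \<bar>mesh h n - \<xi>\<bar> \<le> CC * h powr (real p / real (Suc k))"
    proof (cases "d = 0")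
      case True
      hence "tm (Suc n) = \<xi>" using n by (auto simp: d_def min_def split: if_splits)
      thus ?thesis using hpos unfolding tm_def by (intro exI[of _ "Suc n"]) simp
    next
      case False
      hence d0: "d > 0" using dpos by simp
      have dwit: "\<exists>n. \<bar>mesh h n - \<xi>\<bar> = d"
      proof (cases "\<xi> - tm n \<le> tm (Suc n) - \<xi>")
        case True
        hence "\<bar>mesh h n - \<xi>\<bar> = d" using n by (simp add: d_def tm_def)
        thus ?thesis by blast
      next
        case False
        hence "\<bar>mesh h (Suc n) - \<xi>\<bar> = d" using n by (simp add: d_def tm_def)
        thus ?thesis by blast
      qed
      define \<delta> where "\<delta> = d / real M"
      have Mpos: "real M > 0" by (simp add: M_def)
      have dM: "real M * \<delta> = d" using Mpos by (simp add: \<delta>_def)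
      have dl: "0 < \<delta>" using d0 Mpos by (simp add: \<delta>_def)
      have dle: "\<delta> \<le> d" using d0 M2 by (simp add: \<delta>_def field_simps)
      have h1: "h \<le> 1" "h \<le> \<epsilon>" "h \<le> T - \<xi>" "h \<le> c0 / (2 * K3 + 1)" "h \<le> hg"
        using h by (auto simp: h0_def)
      have core1: "c0 * \<delta> ^ Suc k \<le> K3 * \<delta> ^ Suc (Suc k) +
          \<bar>fdiff M (\<lambda>j. (if j = M then gR else gL) (\<xi> + (real j + 1 - real M) * \<delta>) \<bullet> a)\<bar>"
        using core dl dM dh h1 unfolding c0_def by auto
      define x where "x = (\<lambda>j::nat. \<xi> + (real j + 1 - real M) * \<delta>)"
      obtain Q where Q: "degree Q \<le> m"
        "\<forall>y. tm n < y \<and> y \<le> tm (Suc n) \<longrightarrow> uh h y \<bullet> a = poly Q ((y - tm n) / (tm (Suc n) - tm n))"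
        using fcrk_poly[OF fc[folded tm_def] step(1), of a] unfolding m_def by blast
      define hn where "hn = tm (Suc n) - tm n"
      have hn: "hn > 0" using step by (simp add: hn_def)
      define W where "W = (\<lambda>j. poly Q ((\<xi> + (1 - real M) * \<delta> - tm n) / hn + (\<delta> / hn) * real j))"
      have W0: "fdiff M W = 0" unfolding W_def
        by (rule fdiff_poly) (use Q(1) in \<open>simp add: M_def\<close>)
      have pts: "\<xi> - d < x j \<and> tm n < x j \<and> x j \<le> tm (Suc n) \<and> t0 \<le> x j \<and> x j \<le> T" if j: "j \<le> M" for j
      proof -
        have "real j \<le> real M" using j by simp
        have lo: "x j \<ge> \<xi> + (1 - real M) * \<delta>" unfolding x_def using dl by (simp add: mult_right_mono)
        have hi: "x j \<le> \<xi> + \<delta>" unfolding x_def using dl \<open>real j \<le> real M\<close> by (simp add: mult_right_mono)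
        have "\<xi> + (1 - real M) * \<delta> > \<xi> - d" using dM dl by (simp add: algebra_simps)
        moreover have "\<xi> - d \<ge> tm n" by (simp add: d_def)
        moreover have "\<xi> + \<delta> \<le> tm (Suc n)" using dle by (simp add: d_def)
        moreover have "\<xi> + \<delta> \<le> T" using dle dh h1 by simp
        ultimately show ?thesis using lo hi tn0 by auto
      qed
      have FW: "\<bar>(if j = M then gR else gL) (\<xi> + (real j + 1 - real M) * \<delta>) \<bullet> a - W j\<bar> \<le> norm a * Cg * h ^ p"
        if j: "j \<le> M" for j
      proof -
        have P: "tm n < x j" "x j \<le> tm (Suc n)" "t0 \<le> x j" "x j \<le> T" "\<xi> - d < x j" using pts[OF j] by auto
        have gu: "(if j = M then gR else gL) (x j) = u (x j)"
        proof (cases "j = M")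
          case True
          hence "x j = \<xi> + \<delta>" unfolding x_def by simp
          moreover have "\<xi> + \<delta> \<le> \<xi> + \<epsilon>" using dle dh h1 by simp
          ultimately show ?thesis using uR dl True by auto
        next
          case False
          hence "real j + 1 - real M \<le> 0" using j by simp
          hence "x j \<le> \<xi>" unfolding x_def using dl by (simp add: mult_nonpos_nonneg)
          moreover have "x j \<ge> \<xi> - \<epsilon>" using P(5) dh h1 by simp
          ultimately show ?thesis using uL False by auto
        qed
        have Wj: "W j = uh h (x j) \<bullet> a"
          using Q(2) P unfolding W_def x_def hn_def by (simp add: add_divide_distrib diff_divide_distrib algebra_simps)
        have "\<bar>(u (x j) - uh h (x j)) \<bullet> a\<bar> \<le> norm (u (x j) - uh h (x j)) * norm a"
          by (rule Cauchy_Schwarz_ineq2)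
        also have "\<dots> \<le> Cg * h ^ p * norm a"
          using Cg h h1 P by (intro mult_right_mono) auto
        finally show ?thesis using gu Wj by (simp add: x_def inner_diff_left algebra_simps)
      qed
      have "\<bar>fdiff M (\<lambda>j. (if j = M then gR else gL) (\<xi> + (real j + 1 - real M) * \<delta>) \<bullet> a)\<bar>
          = \<bar>fdiff M (\<lambda>j. (if j = M then gR else gL) (\<xi> + (real j + 1 - real M) * \<delta>) \<bullet> a - W j)\<bar>"
        by (simp add: fdiff_diff W0)
      also have "\<dots> \<le> 2^M * (norm a * Cg * h ^ p)"
        by (rule fdiff_bound) (rule FW)
      finally have fb: "\<bar>fdiff M (\<lambda>j. (if j = M then gR else gL) (\<xi> + (real j + 1 - real M) * \<delta>) \<bullet> a)\<bar> \<le> C1 * h ^ p"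
        by (simp add: C1_def algebra_simps)
      have "K3 * \<delta> \<le> c0 / 2"
      proof -
        have "\<delta> \<le> c0 / (2 * K3 + 1)" using dle dh h1 by simp
        hence "(2 * K3 + 1) * \<delta> \<le> c0" using K3 by (simp add: field_simps)
        thus ?thesis using dl K3 by (simp add: algebra_simps)
      qed
      hence "K3 * \<delta> ^ Suc (Suc k) \<le> c0 / 2 * \<delta> ^ Suc k"
        using dl by (simp add: mult_right_mono mult.assoc[symmetric])
      hence "c0 / 2 * \<delta> ^ Suc k \<le> C1 * h ^ p" using core1 fb by simp
      hence "\<delta> ^ Suc k \<le> (2 * C1 / c0) * h ^ p" using c0 by (simp add: field_simps)
      hence "\<delta> \<le> (2 * C1 / c0) powr (1 / real (Suc k)) * h powr (real p / real (Suc k))"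
        using dl C1 c0 h by (intro root_bound) auto
      hence "real M * \<delta> \<le> real M * ((2 * C1 / c0) powr (1 / real (Suc k)) * h powr (real p / real (Suc k)))"
        using Mpos by (intro mult_left_mono) auto
      hence "d \<le> CC * h powr (real p / real (Suc k))"
        using dM unfolding CC_def by (simp add: mult.assoc)
      thus ?thesis using dwit by metis
    qed
  qed
qed


end
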